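(* Let $d\ge0$, $n\ge d+1$. There is a Zariski-open dense subset $U\subset\mathbb{R}^n\times\mathbb{R}^{n-d}$ such that the restriction of the higher Prony map $\Phi_{d,n}$ to $U\cap\{x_1<\cdots<x_n,\ \alpha_i\ne0\ \forall i\}$ is injective. Moreover, for $(x,\alpha)$ in this set and $M=\Phi_{d,n}(x,\alpha)$: the Hankel matrix $H_M$ has one-dimensional kernel; the roots of its kernel polynomial $p_M$ are $x_1,\dots,x_n$; and $\alpha$ is the unique solution of the square linear system $A_{d,n}(\mathcal{X})\alpha=b(M)$, where $b(M)=(\binom{r+d}{d}m_r)_{0\le r\le n-d-1}$. Furthermore, $\sum_i\alpha_i\mu_{(x_i,\dots,x_{i+d})}$ lies in the positive simplicial spline cone iff $A_{d,n}(\mathcal{X})^{-1}b(M)$ has nonnegative coordinates.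
   Context: $\mu_V$ for a list $V=(v_1,\dots,v_{d+1})$ is the law of $\sum_k\lambda_kv_k$ with $\lambda$ uniform on the standard simplex $\{\lambda\in\mathbb{R}^{d+1}_{\ge0}:\sum\lambda_k=1\}$. The positive simplicial spline cone for $\mathcal{X}=\{x_1,\dots,x_n\}$ is $\{\sum_i\beta_i\mu_{(x_i,\dots,x_{i+d})}:\beta_i\ge0\}$. The higher Prony map $\Phi_{d,n}:\mathbb{R}^n\times\mathbb{R}^{n-d}\to\mathbb{R}^{2n-d}$ sends $(x;\alpha)$ to $M=(m_0,\dots,m_{2n-d-1})$ with $m_j=\binom{j+d}{d}^{-1}\sum_{i=1}^{n-d}\alpha_ih_j(x_i,\dots,x_{i+d})$, $h_j$ the complete homogeneous symmetric polynomial. Normalized sequence: $c_0=\cdots=c_{d-1}=0$, $c_{d+i}=\binom{i+d}{d}m_i$. $H_M=(c_{i+j})_{0\le i\le n-1,\,0\le j\le n}$; the kernel polynomial is $p_M(t)=\sum_{k=0}^nu_kt^k$ for $(u_0,\dots,u_n)$ spanning $\ker H_M$. $A_{d,n}(\mathcal{X})=(h_r(x_i,\dots,x_{i+d}))_{0\le r\le n-d-1,\,1\le i\le n-d}$. *)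

theory Defs
  imports "HOL-Probability.Probability" "HOL-Computational_Algebra.Polynomial"
begin

text \<open>Conventions: indices are 0-based. A point x of R^n is a real list of length n,
  alpha in R^(n-d) a real list of length n-d.\<close>

text \<open>Complete homogeneous symmetric polynomial h_j evaluated at a list of reals.\<close>
fun hcomp :: "nat \<Rightarrow> real list \<Rightarrow> real" where
  "hcomp j [] = (if j = 0 then 1 else 0)"
| "hcomp j (a # xs) = (\<Sum>k\<le>j. a ^ k * hcomp (j - k) xs)"

definition window :: "real list \<Rightarrow> nat \<Rightarrow> nat \<Rightarrow> real list" where
  "window x d i = take (Suc d) (drop i x)"

definition prony_moment :: "nat \<Rightarrow> real list \<Rightarrow> real list \<Rightarrow> nat \<Rightarrow> real" where
  "prony_moment d x \<alpha> j =
     (\<Sum>i<length \<alpha>. \<alpha> ! i * hcomp j (window x d i)) / real ((j + d) choose d)"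

definition prony_map :: "nat \<Rightarrow> nat \<Rightarrow> real list \<Rightarrow> real list \<Rightarrow> real list" where
  "prony_map d n x \<alpha> = map (prony_moment d x \<alpha>) [0..<2 * n - d]"

definition norm_seq :: "nat \<Rightarrow> real list \<Rightarrow> nat \<Rightarrow> real" where
  "norm_seq d M k = (if k < d then 0 else real (k choose d) * M ! (k - d))"

definition hankel_kernel :: "nat \<Rightarrow> nat \<Rightarrow> real list \<Rightarrow> real list set" where
  "hankel_kernel d n M = {u. length u = Suc n \<and>
      (\<forall>i<n. (\<Sum>j\<le>n. norm_seq d M (i + j) * u ! j) = 0)}"

definition spline_A :: "nat \<Rightarrow> real list \<Rightarrow> nat \<Rightarrow> nat \<Rightarrow> real" where
  "spline_A d x r i = hcomp r (window x d i)"

definition b_vec :: "nat \<Rightarrow> real list \<Rightarrow> nat \<Rightarrow> real" where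
  "b_vec d M r = real ((r + d) choose d) * M ! r"

definition solves_system :: "nat \<Rightarrow> nat \<Rightarrow> real list \<Rightarrow> real list \<Rightarrow> real list \<Rightarrow> bool" where
  "solves_system d n x M \<beta> \<longleftrightarrow> length \<beta> = n - d \<and>
     (\<forall>r<n - d. (\<Sum>i<n - d. spline_A d x r i * \<beta> ! i) = b_vec d M r)"

inductive_set poly_fun :: "nat \<Rightarrow> (real list \<Rightarrow> real) set" for N :: nat where
  const: "(\<lambda>v. c) \<in> poly_fun N"
| var: "i < N \<Longrightarrow> (\<lambda>v. v ! i) \<in> poly_fun N"
| add: "f \<in> poly_fun N \<Longrightarrow> g \<in> poly_fun N \<Longrightarrow> (\<lambda>v. f v + g v) \<in> poly_fun N"
| mult: "f \<in> poly_fun N \<Longrightarrow> g \<in> poly_fun N \<Longrightarrow> (\<lambda>v. f v * g v) \<in> poly_fun N"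

definition affine_space :: "nat \<Rightarrow> real list set" where
  "affine_space N = {v. length v = N}"

definition zariski_closed :: "nat \<Rightarrow> real list set \<Rightarrow> bool" where
  "zariski_closed N C \<longleftrightarrow> (\<exists>S \<subseteq> poly_fun N. C = {v \<in> affine_space N. \<forall>f\<in>S. f v = 0})"

definition zariski_open :: "nat \<Rightarrow> real list set \<Rightarrow> bool" where
  "zariski_open N U \<longleftrightarrow> U \<subseteq> affine_space N \<and> zariski_closed N (affine_space N - U)"

definition zariski_dense :: "nat \<Rightarrow> real list set \<Rightarrow> bool" where
  "zariski_dense N U \<longleftrightarrow> (\<forall>C. zariski_closed N C \<and> U \<subseteq> C \<longrightarrow> C = affine_space N)"

text \<open>R^n x R^(n-d), identified with R^(2n-d) via concatenation.\<close>
definition pair_space :: "nat \<Rightarrow> nat \<Rightarrow> (real list \<times> real list) set" where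
  "pair_space d n = {(x, \<alpha>). length x = n \<and> length \<alpha> = n - d}"

definition zariski_open_dense_pairs :: "nat \<Rightarrow> nat \<Rightarrow> (real list \<times> real list) set \<Rightarrow> bool" where
  "zariski_open_dense_pairs d n U \<longleftrightarrow> U \<subseteq> pair_space d n \<and>
     zariski_open (2 * n - d) ((\<lambda>(x, \<alpha>). x @ \<alpha>) ` U) \<and>
     zariski_dense (2 * n - d) ((\<lambda>(x, \<alpha>). x @ \<alpha>) ` U)"

text \<open>mu_V: law of sum lambda_k v_k with lambda uniform on the standard simplex in R^(d+1);
  the simplex is parametrised by its first d coordinates (lambda_(d+1) = 1 - sum).\<close>
definition simplex_param :: "nat \<Rightarrow> (nat \<Rightarrow> real) set" where
  "simplex_param d = {l \<in> PiE {..<d} (\<lambda>_. UNIV). (\<forall>k<d. 0 \<le> l k) \<and> (\<Sum>k<d. l k) \<le> 1}"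

definition simplex_measure :: "nat \<Rightarrow> real list \<Rightarrow> real measure" where
  "simplex_measure d V = distr (uniform_measure (PiM {..<d} (\<lambda>_. lborel)) (simplex_param d)) borel
      (\<lambda>l. (\<Sum>k<d. l k * V ! k) + (1 - (\<Sum>k<d. l k)) * V ! d)"

definition spline_combination :: "nat \<Rightarrow> real list \<Rightarrow> real list \<Rightarrow> real set \<Rightarrow> real" where
  "spline_combination d x \<alpha> A = (\<Sum>i<length \<alpha>. \<alpha> ! i * measure (simplex_measure d (window x d i)) A)"

definition in_spline_cone :: "nat \<Rightarrow> real list \<Rightarrow> (real set \<Rightarrow> real) \<Rightarrow> bool" where
  "in_spline_cone d x \<nu> \<longleftrightarrow> (\<exists>\<beta>. length \<beta> = length x - d \<and> (\<forall>i<length \<beta>. 0 \<le> \<beta> ! i) \<and>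
      (\<forall>A\<in>sets borel. \<nu> A = spline_combination d x \<beta> A))"

end

theory Submission
  imports Defs
begin


definition EE :: "real set \<Rightarrow> nat \<Rightarrow> real" where
  "EE X k = (\<Sum>y\<in>X. y ^ k / (\<Prod>z\<in>X - {y}. y - z))"

lemma EE_insert_Suc:
  assumes "finite X" "a \<notin> X"
  shows "EE (insert a X) (Suc k) = a * EE (insert a X) k + EE X k"
proof -
  have "EE (insert a X) (Suc k) - a * EE (insert a X) k =
        (\<Sum>y\<in>insert a X. y ^ k * (y - a) / (\<Prod>z\<in>insert a X - {y}. y - z))"
    unfolding EE_def sum_distrib_left sum_subtractf[symmetric]
    by (rule sum.cong) (auto simp: diff_divide_distrib[symmetric] algebra_simps)
  also have "\<dots> = (\<Sum>y\<in>X. y ^ k * (y - a) / (\<Prod>z\<in>insert a X - {y}. y - z))"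
    using assms by (simp add: sum.insert)
  also have "\<dots> = EE X k"
    unfolding EE_def
  proof (rule sum.cong)
    fix y assume y: "y \<in> X"
    then have ya: "y \<noteq> a" using assms by auto
    have "insert a X - {y} = insert a (X - {y})" using ya by auto
    then have "(\<Prod>z\<in>insert a X - {y}. y - z) = (y - a) * (\<Prod>z\<in>X - {y}. y - z)"
      using assms by (simp add: prod.insert)
    then show "y ^ k * (y - a) / (\<Prod>z\<in>insert a X - {y}. y - z) = y ^ k / (\<Prod>z\<in>X - {y}. y - z)"
      using ya by simp
  qed simp
  finally show ?thesis by simp
qed

lemma EE_two:
  assumes "finite Y" "a \<notin> Y" "b \<notin> Y" "a \<noteq> b"
  shows "(a - b) * EE (insert a (insert b Y)) k = EE (insert a Y) k - EE (insert b Y) k"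
proof -
  have 1: "EE (insert a (insert b Y)) (Suc k) = a * EE (insert a (insert b Y)) k + EE (insert b Y) k"
    using assms by (intro EE_insert_Suc) auto
  have "EE (insert b (insert a Y)) (Suc k) = b * EE (insert b (insert a Y)) k + EE (insert a Y) k"
    using assms by (intro EE_insert_Suc) auto
  then have 2: "EE (insert a (insert b Y)) (Suc k) = b * EE (insert a (insert b Y)) k + EE (insert a Y) k"
    by (simp add: insert_commute)
  from 1 2 show ?thesis by (simp add: algebra_simps)
qed

lemma EE_single: "EE {a} k = a ^ k"
  by (simp add: EE_def)

lemma EE_zero: "finite X \<Longrightarrow> card X \<ge> 2 \<Longrightarrow> EE X 0 = 0"
proof (induction "card X" arbitrary: X rule: less_induct)
  case less
  obtain a where a: "a \<in> X" using less.prems by (metis card.empty not_numeral_le_zero ex_in_conv)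
  have "card (X - {a}) \<ge> 1" using less.prems a by auto
  then obtain b where b: "b \<in> X - {a}" by (metis card.empty ex_in_conv not_one_le_zero)
  define Y where "Y = X - {a, b}"
  have XY: "X = insert a (insert b Y)" using a b by (auto simp: Y_def)
  have fY: "finite Y" "a \<notin> Y" "b \<notin> Y" "a \<noteq> b" using less.prems b by (auto simp: Y_def)
  have e: "(a - b) * EE X 0 = EE (insert a Y) 0 - EE (insert b Y) 0"
    unfolding XY by (rule EE_two) (use fY in auto)
  show ?case
  proof (cases "Y = {}")
    case True
    then show ?thesis using e fY by (simp add: EE_single)
  next
    case False
    then have cY: "card Y \<ge> 1" using fY by (simp add: Suc_leI card_gt_0_iff)
    have cX: "card X = Suc (Suc (card Y))" using XY fY by simp
    have "EE (insert a Y) 0 = 0"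
      by (rule less.hyps) (use fY cX cY in auto)
    moreover have "EE (insert b Y) 0 = 0"
      by (rule less.hyps) (use fY cX cY in auto)
    ultimately show ?thesis using e fY by simp
  qed
qed

lemma hcomp_0: "hcomp 0 xs = 1"
  by (induction xs) auto

lemma hcomp_single: "hcomp j [a] = a ^ j"
proof -
  have "hcomp j [a] = (\<Sum>k\<le>j. a^k * (if j - k = 0 then 1 else 0))" by simp
  also have "\<dots> = (\<Sum>k\<le>j. if k = j then a^k else 0)" by (rule sum.cong) auto
  finally show ?thesis by simp
qed

lemma hcomp_Suc_Cons: "hcomp (Suc j) (a # xs) = a * hcomp j (a # xs) + hcomp (Suc j) xs"
proof -
  have "hcomp (Suc j) (a # xs) = (\<Sum>k\<le>Suc j. a ^ k * hcomp (Suc j - k) xs)" by simp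
  also have "\<dots> = hcomp (Suc j) xs + (\<Sum>k\<le>j. a ^ Suc k * hcomp (j - k) xs)"
    by (subst sum.atMost_Suc_shift) simp
  also have "(\<Sum>k\<le>j. a ^ Suc k * hcomp (j - k) xs) = a * hcomp j (a # xs)"
    by (simp add: sum_distrib_left mult.assoc)
  finally show ?thesis by simp
qed

definition HH :: "real list \<Rightarrow> nat \<Rightarrow> real" where
  "HH V k = (if V = [] then 0 else if length V \<le> k + 1 then hcomp (k + 1 - length V) V else 0)"

lemma EE_HH: "distinct V \<Longrightarrow> EE (set V) k = HH V k"
proof (induction V arbitrary: k)
  case Nil
  then show ?case by (simp add: EE_def HH_def)
next
  case (Cons a xs)
  have IH: "EE (set xs) k = HH xs k" for k using Cons by simp
  have anot: "a \<notin> set xs" using Cons by simp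
  show ?case
  proof (induction k)
    case 0
    show ?case
    proof (cases "xs = []")
      case True
      then show ?thesis by (simp add: EE_single HH_def hcomp_0 del: hcomp.simps)
    next
      case False
      then have "card (set (a # xs)) \<ge> 2" using Cons.prems
        by (simp add: distinct_card) (metis Suc_le_eq length_greater_0_conv)
      then show ?thesis using EE_zero[of "set (a#xs)"] False by (simp add: HH_def)
    qed
  next
    case (Suc k)
    have "EE (set (a # xs)) (Suc k) = a * EE (set (a#xs)) k + EE (set xs) k"
      using anot by (simp add: EE_insert_Suc)
    also have "\<dots> = a * HH (a#xs) k + HH xs k" using Suc IH by simp
    also have "\<dots> = HH (a#xs) (Suc k)"
    proof (cases "xs = []")
      case True
      then show ?thesis by (simp add: HH_def hcomp_single del: hcomp.simps)
    next
      case False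
      consider "k + 1 < length xs" | "k + 1 = length xs" | "k + 1 > length xs" by linarith
      then show ?thesis
      proof cases
        case 1 then show ?thesis using False by (simp add: HH_def)
      next
        case 2 then show ?thesis using False by (simp add: HH_def hcomp_0)
      next
        case 3
        define j where "j = k - length xs"
        have h1: "HH (a#xs) (Suc k) = hcomp (Suc j) (a#xs)" using 3 by (simp add: HH_def j_def Suc_diff_le del: hcomp.simps)
        have h2: "HH (a#xs) k = hcomp j (a#xs)" using 3 by (simp add: HH_def j_def del: hcomp.simps)
        have h3: "HH xs k = hcomp (Suc j) xs" using 3 False by (simp add: HH_def j_def Suc_diff_le del: hcomp.simps)
        show ?thesis unfolding h1 h2 h3 hcomp_Suc_Cons ..
      qed
    qed
    finally show ?case .
  qed
qed



lemma poly_Poly_sum: "poly (Poly u) (y::real) = (\<Sum>j<length u. u ! j * y ^ j)"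
proof (induction u)
  case Nil then show ?case by simp
next
  case (Cons a u)
  have "(\<Sum>j<length (a # u). (a # u) ! j * y ^ j) = a + (\<Sum>j<length u. u ! j * y ^ Suc j)"
    by (simp only: length_Cons sum.lessThan_Suc_shift) simp
  also have "\<dots> = a + y * (\<Sum>j<length u. u ! j * y ^ j)"
    by (simp add: sum_distrib_left mult_ac)
  finally show ?case using Cons by simp
qed

lemma vandermonde_zero:
  fixes f :: "real \<Rightarrow> real"
  assumes fin: "finite X" and c: "card X \<le> n" and h: "\<forall>k<n. (\<Sum>y\<in>X. f y * y ^ k) = 0"
  shows "\<forall>y\<in>X. f y = 0"
proof
  fix y0 assume y0: "y0 \<in> X"
  define q where "q = (\<Prod>z\<in>X - {y0}. [:-z, 1:])"
  have dq: "degree q \<le> card (X - {y0})"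
    unfolding q_def using degree_prod_sum_le[of "X - {y0}" "\<lambda>z. [:-z, 1:]"] fin by simp
  then have dqn: "degree q < n" using c y0 fin
    by (metis card_Diff1_less le_less_trans order.strict_trans2)
  have pq: "poly q y = (\<Prod>z\<in>X - {y0}. y - z)" for y
    unfolding q_def by (simp add: poly_prod)
  have "(\<Sum>y\<in>X. f y * poly q y) = (\<Sum>y\<in>X. f y * (\<Sum>k\<le>degree q. coeff q k * y ^ k))"
    by (simp add: poly_altdef)
  also have "\<dots> = (\<Sum>k\<le>degree q. coeff q k * (\<Sum>y\<in>X. f y * y ^ k))"
    by (simp add: sum_distrib_left sum_distrib_right mult_ac) (rule sum.swap)
  also have "\<dots> = 0" using h dqn by simp
  finally have s0: "(\<Sum>y\<in>X. f y * poly q y) = 0" .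
  have "(\<Sum>y\<in>X. f y * poly q y) = f y0 * poly q y0 + (\<Sum>y\<in>X - {y0}. f y * poly q y)"
    by (rule sum.remove[OF fin y0])
  moreover have "(\<Sum>y\<in>X - {y0}. f y * poly q y) = 0"
    by (rule sum.neutral) (use fin in \<open>auto simp: pq prod_zero_iff\<close>)
  ultimately have "(\<Sum>y\<in>X. f y * poly q y) = f y0 * poly q y0" by simp
  moreover have "poly q y0 \<noteq> 0" using fin by (simp add: pq)
  ultimately show "f y0 = 0" using s0 by simp
qed

lemma set_window:
  assumes "i + d < length x"
  shows "set (window x d i) = (\<lambda>m. x ! m) ` {i..i+d}"
proof -
  have "window x d i = map (\<lambda>m. x ! m) [i..<i + Suc d]"
    by (rule nth_equalityI) (use assms in \<open>auto simp: window_def simp del: upt_Suc\<close>)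
  then show ?thesis by (simp del: upt_Suc add: atLeastLessThanSuc_atLeastAtMost)
qed

lemma length_window: "i + d < length x \<Longrightarrow> length (window x d i) = Suc d"
  by (simp add: window_def)

lemma distinct_window: "distinct x \<Longrightarrow> distinct (window x d i)"
  by (simp add: window_def)

lemma hcomp_window_EE:
  assumes "distinct x" "i + d < length x"
  shows "hcomp r (window x d i) = EE (set (window x d i)) (r + d)"
proof -
  have l: "length (window x d i) = Suc d" using length_window[OF assms(2)] .
  then have "window x d i \<noteq> []" by auto
  then show ?thesis using EE_HH[of "window x d i" "r + d"] assms l
    by (simp add: distinct_window HH_def)
qed

lemma EE_window_small:
  assumes "distinct x" "i + d < length x" "k < d"
  shows "EE (set (window x d i)) k = 0"
proof -
  have l: "length (window x d i) = Suc d" using length_window[OF assms(2)] .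
  then have "window x d i \<noteq> []" by auto
  then show ?thesis using EE_HH[of "window x d i" k] assms l
    by (simp add: distinct_window HH_def)
qed



definition Sx :: "real list \<Rightarrow> nat \<Rightarrow> nat \<Rightarrow> real set" where
  "Sx x d i = set (window x d i)"

definition wt :: "nat \<Rightarrow> real list \<Rightarrow> real list \<Rightarrow> real \<Rightarrow> real" where
  "wt d x g y = (\<Sum>i\<in>{i\<in>{..<length g}. y \<in> Sx x d i}. g ! i / (\<Prod>z\<in>Sx x d i - {y}. y - z))"

lemma Sx_subset: "Sx x d i \<subseteq> set x"
  unfolding Sx_def window_def by (meson set_drop_subset set_take_subset subset_trans)

lemma moment_wt:
  "(\<Sum>i<length g. g ! i * EE (Sx x d i) k) = (\<Sum>y\<in>set x. wt d x g y * y ^ k)"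
proof -
  have "(\<Sum>i<length g. g ! i * EE (Sx x d i) k) =
        (\<Sum>i<length g. \<Sum>y\<in>set x. (if y \<in> Sx x d i then g ! i / (\<Prod>z\<in>Sx x d i - {y}. y - z) else 0) * y ^ k)"
  proof (rule sum.cong)
    fix i
    have "g ! i * EE (Sx x d i) k = (\<Sum>y\<in>Sx x d i. (g ! i / (\<Prod>z\<in>Sx x d i - {y}. y - z)) * y ^ k)"
      unfolding EE_def sum_distrib_left by (rule sum.cong) auto
    also have "\<dots> = (\<Sum>y\<in>set x. (if y \<in> Sx x d i then g ! i / (\<Prod>z\<in>Sx x d i - {y}. y - z) else 0) * y ^ k)"
      by (rule sum.mono_neutral_cong_left) (use Sx_subset in auto)
    finally show "g ! i * EE (Sx x d i) k = \<dots>" .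
  qed simp
  also have "\<dots> = (\<Sum>y\<in>set x. \<Sum>i<length g. (if y \<in> Sx x d i then g ! i / (\<Prod>z\<in>Sx x d i - {y}. y - z) else 0) * y ^ k)"
    by (rule sum.swap)
  also have "\<dots> = (\<Sum>y\<in>set x. wt d x g y * y ^ k)"
    by (rule sum.cong) (simp_all only: wt_def sum.inter_filter[OF finite_lessThan] sum_distrib_right)
  finally show ?thesis .
qed

context
  fixes d n :: nat and x \<alpha> :: "real list"
  assumes n: "n \<ge> d + 1" and lx: "length x = n" and la: "length \<alpha> = n - d"
    and sx: "sorted_wrt (<) x"
begin

lemma dx: "distinct x" using sx strict_sorted_iff by blast

lemma card_x: "card (set x) = n" using dx lx distinct_card by blast

lemma win_ok: "i < n - d \<Longrightarrow> i + d < length x" using lx by linarith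

lemma norm_seq_eq:
  assumes k: "k < 2 * n"
  shows "norm_seq d (prony_map d n x \<alpha>) k = (\<Sum>i<n - d. \<alpha> ! i * EE (Sx x d i) k)"
proof (cases "k < d")
  case True
  then show ?thesis using EE_window_small[OF dx] win_ok by (simp add: norm_seq_def Sx_def)
next
  case False
  have kd: "k - d < 2 * n - d" using k False by linarith
  have M: "prony_map d n x \<alpha> ! (k - d) = prony_moment d x \<alpha> (k - d)"
    unfolding prony_map_def using kd by simp
  have e: "k - d + d = k" using False by simp
  have nz: "real (k choose d) \<noteq> 0" using False by simp
  have "norm_seq d (prony_map d n x \<alpha>) k = (\<Sum>i<n - d. \<alpha> ! i * hcomp (k - d) (window x d i))"
    unfolding norm_seq_def M prony_moment_def using False nz la e by simp
  also have "\<dots> = (\<Sum>i<n - d. \<alpha> ! i * EE (Sx x d i) k)"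
    by (rule sum.cong) (simp_all add: hcomp_window_EE[OF dx win_ok] Sx_def e)
  finally show ?thesis .
qed

lemma hankel_sum:
  assumes lu: "length u = Suc n" and i: "i < n"
  shows "(\<Sum>j\<le>n. norm_seq d (prony_map d n x \<alpha>) (i + j) * u ! j) =
         (\<Sum>y\<in>set x. (wt d x \<alpha> y * poly (Poly u) y) * y ^ i)"
proof -
  have "(\<Sum>j\<le>n. norm_seq d (prony_map d n x \<alpha>) (i + j) * u ! j) =
        (\<Sum>j\<le>n. (\<Sum>y\<in>set x. wt d x \<alpha> y * y ^ (i + j)) * u ! j)"
    by (rule sum.cong) (use i in \<open>simp_all add: norm_seq_eq moment_wt[of \<alpha>, unfolded la]\<close>)
  also have "\<dots> = (\<Sum>j\<le>n. \<Sum>y\<in>set x. wt d x \<alpha> y * y ^ i * (u ! j * y ^ j))"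
    by (rule sum.cong) (simp_all add: sum_distrib_right sum_distrib_left power_add mult_ac)
  also have "\<dots> = (\<Sum>y\<in>set x. \<Sum>j\<le>n. wt d x \<alpha> y * y ^ i * (u ! j * y ^ j))"
    by (rule sum.swap)
  also have "\<dots> = (\<Sum>y\<in>set x. (wt d x \<alpha> y * poly (Poly u) y) * y ^ i)"
    by (rule sum.cong) (simp_all add: poly_Poly_sum lu lessThan_Suc_atMost sum_distrib_left mult_ac)
  finally show ?thesis .
qed

lemma hankel_kernel_iff:
  assumes wnz: "\<forall>y\<in>set x. wt d x \<alpha> y \<noteq> 0"
  shows "u \<in> hankel_kernel d n (prony_map d n x \<alpha>) \<longleftrightarrow>
         length u = Suc n \<and> (\<forall>y\<in>set x. poly (Poly u) y = 0)"
proof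
  assume u: "u \<in> hankel_kernel d n (prony_map d n x \<alpha>)"
  then have lu: "length u = Suc n" by (simp add: hankel_kernel_def)
  have "\<forall>i<n. (\<Sum>y\<in>set x. (wt d x \<alpha> y * poly (Poly u) y) * y ^ i) = 0"
    using u hankel_sum[OF lu] by (simp add: hankel_kernel_def)
  then have "\<forall>y\<in>set x. wt d x \<alpha> y * poly (Poly u) y = 0"
    by (intro vandermonde_zero) (simp_all add: card_x)
  then show "length u = Suc n \<and> (\<forall>y\<in>set x. poly (Poly u) y = 0)" using wnz lu by simp
next
  assume "length u = Suc n \<and> (\<forall>y\<in>set x. poly (Poly u) y = 0)"
  then show "u \<in> hankel_kernel d n (prony_map d n x \<alpha>)"
    using hankel_sum by (simp add: hankel_kernel_def)
qed

end



lemma roots_force_zero: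
  fixes Q :: "real poly"
  assumes "finite X" "degree Q < card X" "\<forall>y\<in>X. poly Q y = 0"
  shows "Q = 0"
proof (rule ccontr)
  assume Q: "Q \<noteq> 0"
  have "X \<subseteq> {t. poly Q t = 0}" using assms by auto
  then have "card X \<le> card {t. poly Q t = 0}" using poly_roots_finite[OF Q] by (rule card_mono[rotated])
  also have "\<dots> \<le> degree Q" using card_poly_roots_bound[OF Q] .
  finally show False using assms by simp
qed

lemma degree_Poly_le: "length v = Suc n \<Longrightarrow> degree (Poly v) \<le> n"
  by (rule degree_le) (simp add: coeff_Poly_eq nth_default_def)

context
  fixes d n :: nat and x \<alpha> :: "real list"
  assumes n: "n \<ge> d + 1" and lx: "length x = n" and la: "length \<alpha> = n - d"
    and sx: "sorted_wrt (<) x"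
begin

definition PP :: "real poly" where "PP = (\<Prod>y\<in>set x. [:-y, 1:])"

lemma poly_PP: "poly PP t = (\<Prod>y\<in>set x. t - y)"
  unfolding PP_def by (simp add: poly_prod)

lemma PP_nz: "PP \<noteq> 0"
  unfolding PP_def by (simp add: prod_zero_iff)

lemma degree_PP: "degree PP = n"
proof -
  have "degree PP = (\<Sum>y\<in>set x. degree [:-y, 1:])"
    unfolding PP_def by (rule degree_prod_sum_eq) simp
  also have "\<dots> = card (set x)" by simp
  finally show ?thesis using card_x[OF n lx la sx] by simp
qed

lemma coeff_PP_n: "coeff PP n = 1"
proof -
  have "lead_coeff PP = 1" unfolding PP_def by (simp add: lead_coeff_prod)
  then show ?thesis using degree_PP by simp
qed

definition u0 :: "real list" where "u0 = coeffs PP"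

lemma length_u0: "length u0 = Suc n"
  using length_coeffs_degree[OF PP_nz] degree_PP by (simp add: u0_def)

lemma Poly_u0: "Poly u0 = PP" by (simp add: u0_def)

lemma vanish_multiple:
  assumes lv: "length v = Suc n" and vz: "\<forall>y\<in>set x. poly (Poly v) y = 0"
  shows "Poly v = smult (v ! n) PP"
proof -
  define Q where "Q = Poly v - smult (v ! n) PP"
  have dQ: "degree Q \<le> n" unfolding Q_def
    using degree_Poly_le[OF lv] degree_PP by (intro degree_diff_le) simp_all
  have cQ: "coeff Q n = 0" unfolding Q_def using lv coeff_PP_n
    by (simp add: coeff_Poly_eq nth_default_def)
  have "Q = 0"
  proof (cases "n = 0")
    case True
    then show ?thesis using dQ cQ by (metis eq_zero_or_degree_less not_less_zero)
  next
    case False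
    from eq_zero_or_degree_less[OF dQ cQ] show ?thesis
    proof
      assume "degree Q < n"
      moreover have "\<forall>y\<in>set x. poly Q y = 0" using vz by (simp add: Q_def poly_PP)
      ultimately show "Q = 0" using roots_force_zero[of "set x" Q] card_x[OF n lx la sx] by simp
    qed
  qed
  then show ?thesis by (simp add: Q_def)
qed

lemma kernel_structure:
  assumes wnz: "\<forall>y\<in>set x. wt d x \<alpha> y \<noteq> 0"
  shows "(\<exists>u \<in> hankel_kernel d n (prony_map d n x \<alpha>). u \<noteq> replicate (Suc n) 0 \<and>
             (\<forall>v \<in> hankel_kernel d n (prony_map d n x \<alpha>). \<exists>t::real. v = map (\<lambda>a. t * a) u)) \<and>
         (\<forall>u \<in> hankel_kernel d n (prony_map d n x \<alpha>). u \<noteq> replicate (Suc n) 0 \<longrightarrow>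
             {t. poly (Poly u) t = 0} = set x)"
proof
  note K = hankel_kernel_iff[OF n lx la sx wnz]
  show "\<exists>u \<in> hankel_kernel d n (prony_map d n x \<alpha>). u \<noteq> replicate (Suc n) 0 \<and>
             (\<forall>v \<in> hankel_kernel d n (prony_map d n x \<alpha>). \<exists>t::real. v = map (\<lambda>a. t * a) u)"
  proof (intro bexI conjI ballI)
    show "u0 \<in> hankel_kernel d n (prony_map d n x \<alpha>)"
      unfolding K using length_u0 by (simp add: Poly_u0 poly_PP)
    have "u0 ! n = 1" unfolding u0_def using coeffs_nth[OF PP_nz] degree_PP coeff_PP_n by simp
    then show "u0 \<noteq> replicate (Suc n) 0"
    proof (intro notI)
      assume "u0 ! n = 1" "u0 = replicate (Suc n) 0"
      then show False by (metis lessI nth_replicate zero_neq_one)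
    qed
  next
    fix v assume "v \<in> hankel_kernel d n (prony_map d n x \<alpha>)"
    then have lv: "length v = Suc n" and vz: "\<forall>y\<in>set x. poly (Poly v) y = 0" using K by auto
    have e: "Poly v = smult (v ! n) PP" by (rule vanish_multiple[OF lv vz])
    have "v = map (\<lambda>a. v ! n * a) u0"
    proof (rule nth_equalityI)
      show "length v = length (map (\<lambda>a. v ! n * a) u0)" using lv length_u0 by simp
      fix j assume j: "j < length v"
      have "v ! j = coeff (Poly v) j" using j by (simp add: coeff_Poly_eq nth_default_def)
      also have "\<dots> = v ! n * coeff PP j" using e by simp
      also have "coeff PP j = u0 ! j" unfolding u0_def using j lv degree_PP
        by (simp add: coeffs_nth[OF PP_nz])
      finally show "v ! j = map (\<lambda>a. v ! n * a) u0 ! j" using j lv length_u0 by simp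
    qed
    then show "\<exists>t. v = map (\<lambda>a. t * a) u0" by blast
  qed
next
  note K = hankel_kernel_iff[OF n lx la sx wnz]
  show "\<forall>u \<in> hankel_kernel d n (prony_map d n x \<alpha>). u \<noteq> replicate (Suc n) 0 \<longrightarrow>
             {t. poly (Poly u) t = 0} = set x"
  proof (intro ballI impI)
    fix u assume "u \<in> hankel_kernel d n (prony_map d n x \<alpha>)" and unz: "u \<noteq> replicate (Suc n) 0"
    then have lu: "length u = Suc n" and uz: "\<forall>y\<in>set x. poly (Poly u) y = 0" using K by auto
    have e: "Poly u = smult (u ! n) PP" by (rule vanish_multiple[OF lu uz])
    have "u ! n \<noteq> 0"
    proof
      assume "u ! n = 0"
      then have "Poly u = 0" using e by simp
      have uc: "u ! i = coeff (Poly u) i" if "i < Suc n" for i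
        using lu that by (simp add: coeff_Poly_eq nth_default_def)
      have "u = replicate (Suc n) 0"
      proof (rule nth_equalityI)
        show "length u = length (replicate (Suc n) 0)" using lu by simp
        fix i assume "i < length u"
        then show "u ! i = replicate (Suc n) 0 ! i" using uc[of i] lu \<open>Poly u = 0\<close> by (simp del: replicate_Suc)
      qed
      then show False using unz by simp
    qed
    then show "{t. poly (Poly u) t = 0} = set x"
      using e by (auto simp: poly_PP prod_zero_iff)
  qed
qed

end



context
  fixes d n :: nat and x \<alpha> :: "real list"
  assumes n: "n \<ge> d + 1" and lx: "length x = n" and la: "length \<alpha> = n - d"
    and sx: "sorted_wrt (<) x"
begin

lemma mem_Sx:
  assumes j: "j < n" and i: "i < n - d"
  shows "x ! j \<in> Sx x d i \<longleftrightarrow> i \<le> j \<and> j \<le> i + d"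
proof -
  have "x ! j \<in> Sx x d i \<longleftrightarrow> (\<exists>m\<in>{i..i+d}. x ! j = x ! m)"
    unfolding Sx_def set_window[OF win_ok[OF n lx la sx i]] by auto
  also have "\<dots> \<longleftrightarrow> (\<exists>m\<in>{i..i+d}. j = m)"
    using nth_eq_iff_index_eq[OF dx[OF n lx la sx]] j i lx by (metis atLeastAtMost_iff less_diff_conv order_le_less_trans)
  finally show ?thesis by auto
qed

lemma Sx_prod_nz: "i < n - d \<Longrightarrow> (\<Prod>z\<in>Sx x d i - {y}. y - z) \<noteq> 0"
  by (simp add: Sx_def prod_zero_iff)

lemma triangular:
  assumes lg: "length g = n - d" and w0: "\<forall>y\<in>set x. wt d x g y = 0"
  shows "\<forall>j<n - d. g ! j = 0"
proof (intro allI impI)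
  fix j assume "j < n - d"
  then show "g ! j = 0"
  proof (induction j rule: less_induct)
    case (less j)
    have jn: "j < n" using less.prems by linarith
    define A where "A = {i\<in>{..<length g}. x ! j \<in> Sx x d i}"
    have jA: "j \<in> A" unfolding A_def using less.prems lg mem_Sx[OF jn] by auto
    have "wt d x g (x ! j) = (\<Sum>i\<in>A. g ! i / (\<Prod>z\<in>Sx x d i - {x ! j}. x ! j - z))"
      by (simp add: wt_def A_def)
    also have "\<dots> = g ! j / (\<Prod>z\<in>Sx x d j - {x ! j}. x ! j - z) +
        (\<Sum>i\<in>A - {j}. g ! i / (\<Prod>z\<in>Sx x d i - {x ! j}. x ! j - z))"
      by (rule sum.remove[OF _ jA]) (simp add: A_def)
    also have "(\<Sum>i\<in>A - {j}. g ! i / (\<Prod>z\<in>Sx x d i - {x ! j}. x ! j - z)) = 0"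
    proof (rule sum.neutral, rule ballI)
      fix i assume "i \<in> A - {j}"
      then have "i < n - d" "x ! j \<in> Sx x d i" "i \<noteq> j" by (auto simp: A_def lg)
      then have "i < j" using mem_Sx[OF jn] by auto
      then show "g ! i / (\<Prod>z\<in>Sx x d i - {x ! j}. x ! j - z) = 0" using less.IH less.prems by simp
    qed
    finally have "g ! j / (\<Prod>z\<in>Sx x d j - {x ! j}. x ! j - z) = 0"
      using w0 jn lx by simp
    then show ?case using Sx_prod_nz[OF less.prems] by simp
  qed
qed

lemma M_nth: "r < 2 * n - d \<Longrightarrow> prony_map d n x \<alpha> ! r = prony_moment d x \<alpha> r"
  by (simp add: prony_map_def)

lemma b_vec_eq: "r < n - d \<Longrightarrow> b_vec d (prony_map d n x \<alpha>) r = (\<Sum>i<n - d. \<alpha> ! i * hcomp r (window x d i))"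
  using M_nth[of r] by (simp add: b_vec_def prony_moment_def la)

lemma solves_iff: "solves_system d n x (prony_map d n x \<alpha>) \<beta> \<longleftrightarrow> \<beta> = \<alpha>"
proof
  assume "\<beta> = \<alpha>"
  then show "solves_system d n x (prony_map d n x \<alpha>) \<beta>"
    unfolding solves_system_def using la by (simp add: b_vec_eq spline_A_def mult.commute)
next
  assume sol: "solves_system d n x (prony_map d n x \<alpha>) \<beta>"
  then have lb: "length \<beta> = n - d" by (simp add: solves_system_def)
  define g where "g = map (\<lambda>i. \<beta> ! i - \<alpha> ! i) [0..<n - d]"
  have lg: "length g = n - d" by (simp add: g_def)
  have z: "(\<Sum>i<n - d. g ! i * EE (Sx x d i) k) = 0" if k: "k < n" for k
  proof (cases "k < d")
    case True
    then show ?thesis using EE_window_small[OF dx[OF n lx la sx]] win_ok[OF n lx la sx] by (simp add: Sx_def)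
  next
    case False
    define r where "r = k - d"
    have r: "r < n - d" "k = r + d" using k False by (auto simp: r_def)
    have "(\<Sum>i<n - d. g ! i * EE (Sx x d i) k) =
          (\<Sum>i<n - d. spline_A d x r i * \<beta> ! i) - (\<Sum>i<n - d. \<alpha> ! i * hcomp r (window x d i))"
      unfolding sum_subtractf[symmetric] using r
      by (intro sum.cong) (simp_all add: g_def spline_A_def hcomp_window_EE[OF dx[OF n lx la sx] win_ok[OF n lx la sx]] Sx_def algebra_simps)
    also have "\<dots> = 0" using sol r by (simp add: solves_system_def b_vec_eq)
    finally show ?thesis .
  qed
  have "\<forall>k<n. (\<Sum>y\<in>set x. wt d x g y * y ^ k) = 0"
    using z moment_wt[of g x d] lg by simp
  then have "\<forall>y\<in>set x. wt d x g y = 0"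
    by (intro vandermonde_zero) (simp_all add: card_x[OF n lx la sx])
  then have "\<forall>j<n - d. g ! j = 0" by (rule triangular[OF lg])
  then show "\<beta> = \<alpha>" using lb la by (intro nth_equalityI) (auto simp: g_def)
qed

end



lemma poly_fun_sum:
  "finite A \<Longrightarrow> (\<forall>a\<in>A. f a \<in> poly_fun N) \<Longrightarrow> (\<lambda>v. \<Sum>a\<in>A. f a v) \<in> poly_fun N"
proof (induction A rule: finite_induct)
  case empty
  then show ?case using poly_fun.const[of 0 N] by simp
next
  case (insert a A)
  then show ?case using poly_fun.add[of "f a" N "\<lambda>v. \<Sum>a\<in>A. f a v"] by simp
qed

lemma poly_fun_prod:
  "finite A \<Longrightarrow> (\<forall>a\<in>A. f a \<in> poly_fun N) \<Longrightarrow> (\<lambda>v. \<Prod>a\<in>A. f a v) \<in> poly_fun N"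
proof (induction A rule: finite_induct)
  case empty
  then show ?case using poly_fun.const[of 1 N] by simp
next
  case (insert a A)
  then show ?case using poly_fun.mult[of "f a" N "\<lambda>v. \<Prod>a\<in>A. f a v"] by simp
qed

lemma poly_fun_diff:
  "f \<in> poly_fun N \<Longrightarrow> g \<in> poly_fun N \<Longrightarrow> (\<lambda>v. f v - g v) \<in> poly_fun N"
proof -
  assume f: "f \<in> poly_fun N" and g: "g \<in> poly_fun N"
  have "(\<lambda>v. (-1) * g v) \<in> poly_fun N" by (rule poly_fun.mult[OF poly_fun.const g])
  from poly_fun.add[OF f this] show ?thesis by simp
qed

definition line :: "nat \<Rightarrow> real list \<Rightarrow> real list \<Rightarrow> real \<Rightarrow> real list" where
  "line N a b t = map (\<lambda>i. a ! i + t * (b ! i - a ! i)) [0..<N]"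

lemma poly_fun_line: "f \<in> poly_fun N \<Longrightarrow> \<exists>p. \<forall>t. f (line N a b t) = poly p t"
proof (induction rule: poly_fun.induct)
  case (const c)
  then show ?case by (intro exI[of _ "[:c:]"]) simp
next
  case (var i)
  then show ?case by (intro exI[of _ "[:a ! i, b ! i - a ! i:]"]) (simp add: line_def)
next
  case (add f g)
  then obtain p q where "\<forall>t. f (line N a b t) = poly p t" "\<forall>t. g (line N a b t) = poly q t" by blast
  then show ?case by (intro exI[of _ "p + q"]) simp
next
  case (mult f g)
  then obtain p q where "\<forall>t. f (line N a b t) = poly p t" "\<forall>t. g (line N a b t) = poly q t" by blast
  then show ?case by (intro exI[of _ "p * q"]) simp
qed

lemma line_0: "length a = N \<Longrightarrow> line N a b 0 = a"
  by (intro nth_equalityI) (auto simp: line_def)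

lemma line_1: "length b = N \<Longrightarrow> line N a b 1 = b"
  by (intro nth_equalityI) (auto simp: line_def)

lemma length_line: "length (line N a b t) = N" by (simp add: line_def)

lemma zariski_open_nonzero:
  assumes "g \<in> poly_fun N"
  shows "zariski_open N {v \<in> affine_space N. g v \<noteq> 0}"
  unfolding zariski_open_def zariski_closed_def
  by (rule conjI, blast, rule exI[of _ "{g}"]) (use assms in auto)

lemma zariski_dense_nonzero:
  assumes g: "g \<in> poly_fun N" and v0: "length v0 = N" "g v0 \<noteq> 0"
  shows "zariski_dense N {v \<in> affine_space N. g v \<noteq> 0}"
  unfolding zariski_dense_def
proof (intro allI impI)
  fix C assume "zariski_closed N C \<and> {v \<in> affine_space N. g v \<noteq> 0} \<subseteq> C"
  then obtain S where S: "S \<subseteq> poly_fun N" "C = {v \<in> affine_space N. \<forall>f\<in>S. f v = 0}"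
    and UC: "{v \<in> affine_space N. g v \<noteq> 0} \<subseteq> C"
    unfolding zariski_closed_def by blast
  have "\<forall>f\<in>S. f v = 0" if v: "v \<in> affine_space N" for v
  proof
    fix f assume fS: "f \<in> S"
    obtain pf where pf: "\<forall>t. f (line N v0 v t) = poly pf t" using poly_fun_line fS S(1) by blast
    obtain pg where pg: "\<forall>t. g (line N v0 v t) = poly pg t" using poly_fun_line g by blast
    have pg0: "pg \<noteq> 0" using pg[rule_format, of 0] line_0[OF v0(1)] v0(2) by auto
    have "poly pf t = 0" if "poly pg t \<noteq> 0" for t
    proof -
      have "line N v0 v t \<in> C" using UC that pg
        by (auto simp: affine_space_def length_line)
      then show ?thesis using S(2) fS pf by auto
    qed
    then have sub: "UNIV \<subseteq> {t. poly pg t = 0} \<union> {t. poly pf t = 0}" by auto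
    have "pf = 0"
    proof (rule ccontr)
      assume "pf \<noteq> 0"
      then have "finite ({t. poly pg t = 0} \<union> {t. poly pf t = 0})"
        using poly_roots_finite pg0 by blast
      then have "finite (UNIV :: real set)" using sub finite_subset by blast
      then show False using infinite_UNIV_char_0 by blast
    qed
    then show "f v = 0" using pf[rule_format, of 1] line_1 v by (simp add: affine_space_def)
  qed
  then show "C = affine_space N" using S(2) by auto
qed



definition TT :: "nat \<Rightarrow> nat \<Rightarrow> nat \<Rightarrow> nat set" where
  "TT d n l = {m. m < n \<and> m \<noteq> l \<and> l \<le> m + d \<and> m \<le> l + d}"

definition II :: "nat \<Rightarrow> nat \<Rightarrow> nat \<Rightarrow> nat set" where
  "II d n l = {i. i < n - d \<and> i \<le> l \<and> l \<le> i + d}"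

definition GG :: "nat \<Rightarrow> nat \<Rightarrow> nat \<Rightarrow> real list \<Rightarrow> real" where
  "GG d n l v = (\<Sum>i\<in>II d n l. v ! (n + i) * (\<Prod>m\<in>TT d n l - {i..i+d}. v ! l - v ! m))"

definition gg :: "nat \<Rightarrow> nat \<Rightarrow> real list \<Rightarrow> real" where
  "gg d n v = (\<Prod>l<n. GG d n l v)"

lemma finite_TT: "finite (TT d n l)" by (simp add: TT_def)
lemma finite_II: "finite (II d n l)" by (simp add: II_def)

lemma gg_poly_fun:
  assumes "n \<ge> d"
  shows "gg d n \<in> poly_fun (2 * n - d)"
proof -
  have G: "GG d n l \<in> poly_fun (2 * n - d)" if l: "l < n" for l
  proof -
    have "(\<lambda>v. \<Sum>i\<in>II d n l. v ! (n + i) * (\<Prod>m\<in>TT d n l - {i..i+d}. v ! l - v ! m)) \<in> poly_fun (2 * n - d)"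
    proof (rule poly_fun_sum[OF finite_II], rule ballI)
      fix i assume i: "i \<in> II d n l"
      have vi: "(\<lambda>v. v ! (n + i)) \<in> poly_fun (2 * n - d)"
        using i assms by (intro poly_fun.var) (auto simp: II_def)
      have "(\<lambda>v. \<Prod>m\<in>TT d n l - {i..i+d}. v ! l - v ! m) \<in> poly_fun (2 * n - d)"
        using finite_TT l assms
        by (intro poly_fun_prod) (auto simp: TT_def intro!: poly_fun_diff poly_fun.var)
      from poly_fun.mult[OF vi this] show "(\<lambda>v. v ! (n + i) * (\<Prod>m\<in>TT d n l - {i..i+d}. v ! l - v ! m)) \<in> poly_fun (2 * n - d)" .
    qed
    then show ?thesis by (simp add: GG_def[abs_def])
  qed
  have "(\<lambda>v. \<Prod>l\<in>{..<n}. GG d n l v) \<in> poly_fun (2 * n - d)"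
    by (rule poly_fun_prod) (use G in auto)
  then show ?thesis by (simp add: gg_def[abs_def])
qed

lemma II_nonempty: "n \<ge> d + 1 \<Longrightarrow> l < n \<Longrightarrow> min l (n - d - 1) \<in> II d n l"
  by (auto simp: II_def min_def)

lemma exists_good_point:
  assumes n: "n \<ge> d + 1"
  shows "\<exists>v. length v = 2 * n - d \<and> gg d n v \<noteq> 0"
proof -
  define x0 where "x0 = map real [0..<n]"
  define c where "c l i = (\<Prod>m\<in>TT d n l - {i..i+d}. real l - real m)" for l i
  define Q where "Q l = (\<Sum>i\<in>II d n l. monom (c l i) i)" for l
  have cnz: "c l i \<noteq> 0" for l i
    unfolding c_def using finite_TT by (auto simp: prod_zero_iff TT_def)
  have Qnz: "Q l \<noteq> 0" if l: "l < n" for l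
  proof
    assume "Q l = 0"
    then have "coeff (Q l) (min l (n - d - 1)) = 0" by simp
    moreover have "coeff (Q l) (min l (n - d - 1)) = c l (min l (n - d - 1))"
      unfolding Q_def coeff_sum coeff_monom
      using II_nonempty[OF n l] finite_II by (simp add: sum.delta)
    ultimately show False using cnz by simp
  qed
  have "(\<Prod>l<n. Q l) \<noteq> 0" using Qnz by (simp add: prod_zero_iff)
  then obtain s where s: "poly (\<Prod>l<n. Q l) s \<noteq> 0" using poly_all_0_iff_0 by blast
  define v where "v = x0 @ map (\<lambda>i. s ^ i) [0..<n - d]"
  have lv: "length v = 2 * n - d" using n by (simp add: v_def x0_def)
  have "GG d n l v = poly (Q l) s" if l: "l < n" for l
    unfolding GG_def Q_def poly_sum
  proof (rule sum.cong)
    fix i assume i: "i \<in> II d n l"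
    have "v ! (n + i) = s ^ i" using i by (simp add: v_def x0_def nth_append II_def)
    moreover have "(\<Prod>m\<in>TT d n l - {i..i+d}. v ! l - v ! m) = c l i"
      unfolding c_def using l by (intro prod.cong) (auto simp: v_def x0_def nth_append TT_def)
    ultimately show "v ! (n + i) * (\<Prod>m\<in>TT d n l - {i..i+d}. v ! l - v ! m) = poly (monom (c l i) i) s"
      by (simp add: poly_monom)
  qed simp
  then have "gg d n v = poly (\<Prod>l<n. Q l) s" by (simp add: gg_def poly_prod)
  then show ?thesis using lv s by auto
qed

definition UU :: "nat \<Rightarrow> nat \<Rightarrow> (real list \<times> real list) set" where
  "UU d n = {(x, \<alpha>) \<in> pair_space d n. gg d n (x @ \<alpha>) \<noteq> 0}"

lemma UU_image:
  assumes "n \<ge> d"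
  shows "(\<lambda>(x, \<alpha>). x @ \<alpha>) ` UU d n = {v \<in> affine_space (2 * n - d). gg d n v \<noteq> 0}"
proof
  show "(\<lambda>(x, \<alpha>). x @ \<alpha>) ` UU d n \<subseteq> {v \<in> affine_space (2 * n - d). gg d n v \<noteq> 0}"
    using assms by (auto simp: UU_def pair_space_def affine_space_def)
next
  show "{v \<in> affine_space (2 * n - d). gg d n v \<noteq> 0} \<subseteq> (\<lambda>(x, \<alpha>). x @ \<alpha>) ` UU d n"
  proof
    fix v assume v: "v \<in> {v \<in> affine_space (2 * n - d). gg d n v \<noteq> 0}"
    then have "(take n v, drop n v) \<in> UU d n"
      using assms by (auto simp: UU_def pair_space_def affine_space_def)
    then show "v \<in> (\<lambda>(x, \<alpha>). x @ \<alpha>) ` UU d n" by (auto intro!: image_eqI[of _ _ "(take n v, drop n v)"])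
  qed
qed

lemma UU_ok:
  assumes n: "n \<ge> d + 1"
  shows "zariski_open_dense_pairs d n (UU d n)"
proof -
  have nd: "n \<ge> d" using n by simp
  obtain v0 where v0: "length v0 = 2 * n - d" "gg d n v0 \<noteq> 0" using exists_good_point[OF n] by blast
  show ?thesis
    unfolding zariski_open_dense_pairs_def UU_image[OF nd]
    using zariski_open_nonzero[OF gg_poly_fun[OF nd]] zariski_dense_nonzero[OF gg_poly_fun[OF nd] v0]
    by (auto simp: UU_def)
qed



context
  fixes d n :: nat and x \<alpha> :: "real list"
  assumes n: "n \<ge> d + 1" and lx: "length x = n" and la: "length \<alpha> = n - d"
    and sx: "sorted_wrt (<) x"
begin

lemma GG_eq:
  assumes l: "l < n"
  shows "GG d n l (x @ \<alpha>) = wt d x \<alpha> (x ! l) * (\<Prod>m\<in>TT d n l. x ! l - x ! m)"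
proof -
  have D: "distinct x" by (rule dx[OF n lx la sx])
  have A: "{i\<in>{..<length \<alpha>}. x ! l \<in> Sx x d i} = II d n l"
    using mem_Sx[OF n lx la sx l] la by (auto simp: II_def)
  have "wt d x \<alpha> (x ! l) * (\<Prod>m\<in>TT d n l. x ! l - x ! m) =
        (\<Sum>i\<in>II d n l. \<alpha> ! i / (\<Prod>z\<in>Sx x d i - {x ! l}. x ! l - z) * (\<Prod>m\<in>TT d n l. x ! l - x ! m))"
    unfolding wt_def A sum_distrib_right ..
  also have "\<dots> = GG d n l (x @ \<alpha>)"
    unfolding GG_def
  proof (rule sum.cong)
    fix i assume i: "i \<in> II d n l"
    have i': "i < n - d" "i \<le> l" "l \<le> i + d" using i by (auto simp: II_def)
    have inj0: "inj_on (\<lambda>m. x ! m) {i..i+d}"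
    proof (rule inj_onI)
      fix a b assume ab: "a \<in> {i..i+d}" "b \<in> {i..i+d}" "x ! a = x ! b"
      moreover have "a < length x" "b < length x" using ab(1,2) i'(1) lx by auto
      ultimately show "a = b" using nth_eq_iff_index_eq[OF D] by blast
    qed
    have img: "Sx x d i - {x ! l} = (\<lambda>m. x ! m) ` ({i..i+d} - {l})"
      unfolding Sx_def set_window[OF win_ok[OF n lx la sx i'(1)]]
      by (subst inj_on_image_set_diff[OF inj0]) (use i' in auto)
    have inj: "inj_on (\<lambda>m. x ! m) ({i..i+d} - {l})"
      using inj0 by (rule inj_on_subset) auto
    have P1: "(\<Prod>z\<in>Sx x d i - {x ! l}. x ! l - z) = (\<Prod>m\<in>{i..i+d} - {l}. x ! l - x ! m)"
      unfolding img prod.reindex[OF inj] by simp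
    have sub: "{i..i+d} - {l} \<subseteq> TT d n l" using i' by (auto simp: TT_def)
    have P2: "(\<Prod>m\<in>TT d n l. x ! l - x ! m) =
              (\<Prod>m\<in>TT d n l - ({i..i+d} - {l}). x ! l - x ! m) * (\<Prod>m\<in>{i..i+d} - {l}. x ! l - x ! m)"
      by (rule prod.subset_diff[OF sub finite_TT])
    have e: "TT d n l - ({i..i+d} - {l}) = TT d n l - {i..i+d}" by (auto simp: TT_def)
    have nz: "(\<Prod>m\<in>{i..i+d} - {l}. x ! l - x ! m) \<noteq> 0"
      using nth_eq_iff_index_eq[OF D] lx i' l by (auto simp: prod_zero_iff)
    have xa1: "(x @ \<alpha>) ! (n + i) = \<alpha> ! i" using lx by (simp add: nth_append)
    have xa2: "(x @ \<alpha>) ! m = x ! m" if "m < n" for m using lx that by (simp add: nth_append)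
    have "(\<Prod>m\<in>TT d n l - {i..i+d}. (x @ \<alpha>) ! l - (x @ \<alpha>) ! m) = (\<Prod>m\<in>TT d n l - {i..i+d}. x ! l - x ! m)"
      using l by (intro prod.cong) (auto simp: xa2 TT_def)
    then show "\<alpha> ! i / (\<Prod>z\<in>Sx x d i - {x ! l}. x ! l - z) * (\<Prod>m\<in>TT d n l. x ! l - x ! m) =
          (x @ \<alpha>) ! (n + i) * (\<Prod>m\<in>TT d n l - {i..i+d}. (x @ \<alpha>) ! l - (x @ \<alpha>) ! m)"
      unfolding P1 P2 e xa1 using nz by simp
  qed simp
  finally show ?thesis by simp
qed

lemma wt_nonzero:
  assumes "gg d n (x @ \<alpha>) \<noteq> 0"
  shows "\<forall>y\<in>set x. wt d x \<alpha> y \<noteq> 0"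
proof
  fix y assume "y \<in> set x"
  then obtain l where l: "l < n" "y = x ! l" using lx by (auto simp: in_set_conv_nth)
  have "GG d n l (x @ \<alpha>) \<noteq> 0" using assms l by (auto simp: gg_def prod_zero_iff)
  then show "wt d x \<alpha> y \<noteq> 0" using GG_eq[OF l(1)] l by auto
qed

end



abbreviation PP0 :: "nat \<Rightarrow> (nat \<Rightarrow> real) measure" where
  "PP0 d \<equiv> PiM {..<d} (\<lambda>_. lborel)"

definition fV :: "nat \<Rightarrow> real list \<Rightarrow> (nat \<Rightarrow> real) \<Rightarrow> real" where
  "fV d V l = (\<Sum>k<d. l k * V ! k) + (1 - (\<Sum>k<d. l k)) * V ! d"

lemma space_PP0: "space (PP0 d) = PiE {..<d} (\<lambda>_. UNIV)"
  by (simp add: space_PiM)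

lemma simplex_param_alt: "simplex_param d = {l \<in> space (PP0 d). (\<forall>k<d. 0 \<le> l k) \<and> (\<Sum>k<d. l k) \<le> 1}"
  by (simp add: simplex_param_def space_PP0)

lemma simplex_param_sets: "simplex_param d \<in> sets (PP0 d)"
  unfolding simplex_param_alt by measurable

lemma fV_meas: "fV d V \<in> borel_measurable (PP0 d)"
  unfolding fV_def by measurable

lemma simplex_sub_box: "simplex_param d \<subseteq> PiE {..<d} (\<lambda>_. {0..1})"
proof
  fix l assume l: "l \<in> simplex_param d"
  then have "l \<in> PiE {..<d} (\<lambda>_. UNIV)" "\<forall>k<d. 0 \<le> l k" "(\<Sum>k<d. l k) \<le> 1"
    by (auto simp: simplex_param_def)
  moreover have "l k \<le> 1" if "k < d" for k
  proof -
    have "l k \<le> (\<Sum>k<d. l k)" using that calculation(2) by (intro member_le_sum) auto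
    then show ?thesis using calculation(3) by simp
  qed
  ultimately show "l \<in> PiE {..<d} (\<lambda>_. {0..1})" by (auto simp: PiE_def Pi_def)
qed

lemma emeasure_box:
  assumes "\<And>k. k < d \<Longrightarrow> a k \<le> b k"
  shows "emeasure (PP0 d) (PiE {..<d} (\<lambda>k. {a k..b k})) = ennreal (\<Prod>k<d. b k - a k)"
proof -
  interpret product_sigma_finite "\<lambda>_. lborel :: real measure"
    by (simp add: product_sigma_finite_def sigma_finite_lborel)
  have "emeasure (PP0 d) (PiE {..<d} (\<lambda>k. {a k..b k})) = (\<Prod>k<d. emeasure lborel {a k..b k})"
    by (rule emeasure_PiM) auto
  also have "\<dots> = (\<Prod>k<d. ennreal (b k - a k))" using assms by (intro prod.cong) auto
  also have "\<dots> = ennreal (\<Prod>k<d. b k - a k)" using assms by (intro prod_ennreal) auto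
  finally show ?thesis .
qed

lemma simplex_finite: "emeasure (PP0 d) (simplex_param d) \<noteq> \<infinity>"
proof -
  have "emeasure (PP0 d) (simplex_param d) \<le> emeasure (PP0 d) (PiE {..<d} (\<lambda>_. {0..1}))"
    by (rule emeasure_mono[OF simplex_sub_box]) (simp add: sets_PiM_I_finite)
  also have "\<dots> = ennreal 1" using emeasure_box[of d "\<lambda>_. 0" "\<lambda>_. 1"] by simp
  finally show ?thesis by (auto simp: top_unique)
qed



lemma box_pos:
  assumes "\<And>k. k < d \<Longrightarrow> a k < b k" "PiE {..<d} (\<lambda>k. {a k..b k}) \<subseteq> A" "A \<in> sets (PP0 d)"
  shows "emeasure (PP0 d) A \<noteq> 0"
proof -
  have "0 < (\<Prod>k<d. b k - a k)" by (rule prod_pos) (use assms(1) in auto)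
  then have "0 < ennreal (\<Prod>k<d. b k - a k)" by simp
  also have "\<dots> = emeasure (PP0 d) (PiE {..<d} (\<lambda>k. {a k..b k}))"
    using emeasure_box[of d a b] assms(1) by (simp add: less_imp_le)
  also have "\<dots> \<le> emeasure (PP0 d) A" by (rule emeasure_mono[OF assms(2,3)])
  finally show ?thesis by simp
qed

lemma simplex_pos: "emeasure (PP0 d) (simplex_param d) \<noteq> 0"
proof (rule box_pos[of d "\<lambda>_. 0" "\<lambda>_. 1 / (real d + 1)"])
  show "PiE {..<d} (\<lambda>k. {0..1 / (real d + 1)}) \<subseteq> simplex_param d"
  proof
    fix l assume l: "l \<in> PiE {..<d} (\<lambda>k. {0..1 / (real d + 1)})"
    have "(\<Sum>k<d. l k) \<le> (\<Sum>k<d. 1 / (real d + 1))" using l by (intro sum_mono) (auto simp: PiE_def Pi_def)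
    also have "\<dots> \<le> 1" by (simp add: field_simps)
    finally show "l \<in> simplex_param d" using l by (auto simp: simplex_param_def PiE_def Pi_def)
  qed
qed (auto simp: simplex_param_sets)

lemma measure_simplex:
  assumes B: "B \<in> sets borel"
  shows "measure (simplex_measure d V) B =
     measure (PP0 d) (simplex_param d \<inter> (fV d V -` B \<inter> space (PP0 d))) / measure (PP0 d) (simplex_param d)"
proof -
  have m: "fV d V \<in> measurable (uniform_measure (PP0 d) (simplex_param d)) borel"
    using fV_meas measurable_cong_sets[OF sets_uniform_measure refl] by blast
  have "simplex_measure d V = distr (uniform_measure (PP0 d) (simplex_param d)) borel (fV d V)"
    unfolding simplex_measure_def fV_def[abs_def] ..
  then have "measure (simplex_measure d V) B =
      measure (uniform_measure (PP0 d) (simplex_param d)) (fV d V -` B \<inter> space (PP0 d))"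
    using measure_distr[OF m B] by (simp add: space_uniform_measure)
  also have "\<dots> = measure (PP0 d) (simplex_param d \<inter> (fV d V -` B \<inter> space (PP0 d))) / measure (PP0 d) (simplex_param d)"
    by (rule measure_uniform_measure[OF simplex_pos simplex_finite]) (use fV_meas B in measurable)
  finally show ?thesis .
qed

lemma measure_simplex_zero:
  assumes B: "B \<in> sets borel" and h: "\<forall>l\<in>simplex_param d. fV d V l \<notin> B"
  shows "measure (simplex_measure d V) B = 0"
proof -
  have "simplex_param d \<inter> (fV d V -` B \<inter> space (PP0 d)) = {}" using h by auto
  then show ?thesis by (simp add: measure_simplex[OF B])
qed

lemma measure_simplex_pos:
  assumes B: "B \<in> sets borel" and h: "emeasure (PP0 d) (simplex_param d \<inter> (fV d V -` B \<inter> space (PP0 d))) \<noteq> 0"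
  shows "measure (simplex_measure d V) B > 0"
proof -
  have sets: "simplex_param d \<inter> (fV d V -` B \<inter> space (PP0 d)) \<in> sets (PP0 d)"
    using simplex_param_sets fV_meas B by measurable
  have fin: "emeasure (PP0 d) (simplex_param d \<inter> (fV d V -` B \<inter> space (PP0 d))) \<noteq> \<infinity>"
  proof -
    have "emeasure (PP0 d) (simplex_param d \<inter> (fV d V -` B \<inter> space (PP0 d))) \<le> emeasure (PP0 d) (simplex_param d)"
      by (rule emeasure_mono) (auto simp: simplex_param_sets)
    then show ?thesis using simplex_finite by (auto simp: top_unique)
  qed
  have p1: "measure (PP0 d) (simplex_param d \<inter> (fV d V -` B \<inter> space (PP0 d))) > 0"
    using h fin by (simp add: measure_def enn2real_positive_iff less_top zero_less_iff_neq_zero)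
  have p2: "measure (PP0 d) (simplex_param d) > 0"
    using simplex_pos simplex_finite by (simp add: measure_def enn2real_positive_iff less_top zero_less_iff_neq_zero)
  show ?thesis unfolding measure_simplex[OF B] using p1 p2 by simp
qed

lemma fV_minus:
  "fV d V l - V ! 0 = (\<Sum>k<d. l k * (V ! k - V ! 0)) + (1 - (\<Sum>k<d. l k)) * (V ! d - V ! 0)"
proof -
  have h: "(\<Sum>k<d. l k * V ! 0) = (\<Sum>k<d. l k) * V ! 0" by (simp add: sum_distrib_right)
  show ?thesis by (simp add: fV_def algebra_simps sum_subtractf h)
qed

lemma fV_lower:
  assumes l: "l \<in> simplex_param d" and V: "\<forall>k\<le>d. V ! 0 \<le> V ! k"
  shows "V ! 0 \<le> fV d V l"
proof -
  have l': "\<forall>k<d. 0 \<le> l k" "(\<Sum>k<d. l k) \<le> 1" using l by (auto simp: simplex_param_def)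
  have "0 \<le> (\<Sum>k<d. l k * (V ! k - V ! 0)) + (1 - (\<Sum>k<d. l k)) * (V ! d - V ! 0)"
    using l' V by (intro add_nonneg_nonneg sum_nonneg mult_nonneg_nonneg) auto
  then show ?thesis using fV_minus[of d V l] by simp
qed

lemma fV_upper:
  assumes l: "l \<in> simplex_param d" and V: "\<forall>k\<le>d. V ! 0 \<le> V ! k \<and> V ! k \<le> V ! d" and d: "d \<ge> 1"
  shows "fV d V l - V ! 0 \<le> (1 - l 0) * (V ! d - V ! 0)"
proof -
  have l': "\<forall>k<d. 0 \<le> l k" "(\<Sum>k<d. l k) \<le> 1" using l by (auto simp: simplex_param_def)
  define R where "R = V ! d - V ! 0"
  have "(\<Sum>k<d. l k * (V ! k - V ! 0)) \<le> (\<Sum>k<d. (if k = 0 then 0 else l k * R))"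
    using l' V by (intro sum_mono) (auto simp: R_def intro!: mult_left_mono)
  also have "\<dots> = (\<Sum>k<d. l k * R) - l 0 * R"
  proof -
    have "(\<Sum>k<d. l k * R) = (\<Sum>k<d. (if k = 0 then 0 else l k * R)) + (\<Sum>k<d. (if k = 0 then l k * R else 0))"
      by (subst sum.distrib[symmetric]) (rule sum.cong, auto)
    also have "(\<Sum>k<d. (if k = 0 then l k * R else 0)) = l 0 * R" using d by (simp add: sum.delta)
    finally show ?thesis by simp
  qed
  finally have "fV d V l - V ! 0 \<le> (\<Sum>k<d. l k * R) - l 0 * R + (1 - (\<Sum>k<d. l k)) * R"
    using fV_minus[of d V l] by (simp add: R_def)
  also have "\<dots> = (1 - l 0) * R"
  proof -
    have "(\<Sum>k<d. l k * R) = (\<Sum>k<d. l k) * R" by (simp add: sum_distrib_right)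
    then show ?thesis by (simp add: algebra_simps)
  qed
  finally show ?thesis by (simp add: R_def)
qed



definition BB :: "nat \<Rightarrow> real list \<Rightarrow> nat \<Rightarrow> real set" where
  "BB d x i = (if d = 0 then {x ! i} else {x ! i ..< x ! Suc i})"

lemma BB_borel: "BB d x i \<in> sets borel" by (simp add: BB_def)

context
  fixes d n :: nat and x :: "real list"
  assumes n: "n \<ge> d + 1" and lx: "length x = n" and sx: "sorted_wrt (<) x"
begin

lemma xlt: "a < b \<Longrightarrow> b < n \<Longrightarrow> x ! a < x ! b"
  using sorted_wrt_nth_less[OF sx] lx by auto

lemma xle: "a \<le> b \<Longrightarrow> b < n \<Longrightarrow> x ! a \<le> x ! b"
  using xlt by (cases "a = b") (auto simp: less_imp_le)

lemma win_nth: "i < n - d \<Longrightarrow> k \<le> d \<Longrightarrow> window x d i ! k = x ! (i + k)"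
  using lx by (simp add: window_def)

lemma win_V: "i < n - d \<Longrightarrow> \<forall>k\<le>d. window x d i ! 0 \<le> window x d i ! k \<and> window x d i ! k \<le> window x d i ! d"
  using win_nth xle by auto

lemma mu_zero:
  assumes j: "j < n - d" and ij: "i < j"
  shows "measure (simplex_measure d (window x d j)) (BB d x i) = 0"
proof (rule measure_simplex_zero[OF BB_borel], rule ballI)
  fix l assume l: "l \<in> simplex_param d"
  have V0: "\<forall>k\<le>d. window x d j ! 0 \<le> window x d j ! k" using win_V[OF j] by auto
  have low: "x ! j \<le> fV d (window x d j) l"
    using fV_lower[OF l V0] win_nth[OF j, of 0] by simp
  show "fV d (window x d j) l \<notin> BB d x i"
  proof (cases "d = 0")
    case True
    then have "fV d (window x d j) l = x ! j" using win_nth[OF j, of 0] by (simp add: fV_def)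
    then show ?thesis using True xlt[OF ij] j by (auto simp: BB_def)
  next
    case False
    have "x ! Suc i \<le> x ! j" using ij j by (intro xle) auto
    then show ?thesis using False low by (auto simp: BB_def)
  qed
qed

lemma mu_pos:
  assumes i: "i < n - d"
  shows "measure (simplex_measure d (window x d i)) (BB d x i) > 0"
proof (rule measure_simplex_pos[OF BB_borel])
  let ?V = "window x d i"
  let ?A = "simplex_param d \<inter> (fV d ?V -` BB d x i \<inter> space (PP0 d))"
  have As: "?A \<in> sets (PP0 d)" using simplex_param_sets fV_meas BB_borel by measurable
  show "emeasure (PP0 d) ?A \<noteq> 0"
  proof (cases "d = 0")
    case True
    have "?A = simplex_param d"
      using True win_nth[OF i, of 0] simplex_param_sets[of d, THEN sets.sets_into_space]
      by (auto simp: fV_def BB_def)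
    then show ?thesis using simplex_pos by simp
  next
    case False
    then have d1: "d \<ge> 1" by simp
    define \<gamma> where "\<gamma> = x ! Suc i - x ! i"
    define R where "R = x ! (i + d) - x ! i"
    have g0: "\<gamma> > 0" unfolding \<gamma>_def using xlt[of i "Suc i"] i d1 by simp
    have R0: "R > 0" unfolding R_def using i d1 by (simp add: xlt)
    define \<epsilon> where "\<epsilon> = min (1/2) (\<gamma> / (2 * R))"
    have e0: "\<epsilon> > 0" using g0 R0 by (simp add: \<epsilon>_def)
    have eh: "\<epsilon> \<le> 1/2" by (simp add: \<epsilon>_def)
    have eR: "\<epsilon> * R \<le> \<gamma> / 2"
    proof -
      have "\<epsilon> * R \<le> \<gamma> / (2 * R) * R" using R0 by (intro mult_right_mono) (auto simp: \<epsilon>_def)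
      then show ?thesis using R0 by simp
    qed
    define a where "a k = (if k = 0 then 1 - \<epsilon> else 0)" for k :: nat
    define b where "b k = (if k = 0 then 1 - \<epsilon> / 2 else \<epsilon> / (2 * real d))" for k :: nat
    show ?thesis
    proof (rule box_pos[of d a b, OF _ _ As])
      show "a k < b k" if "k < d" for k using e0 d1 by (auto simp: a_def b_def)
      show "PiE {..<d} (\<lambda>k. {a k..b k}) \<subseteq> ?A"
      proof
        fix l assume l: "l \<in> PiE {..<d} (\<lambda>k. {a k..b k})"
        have lk: "a k \<le> l k \<and> l k \<le> b k" if "k < d" for k using l that by (auto simp: PiE_def Pi_def)
        have ed: "0 \<le> \<epsilon> / (2 * real d)" using e0 by simp
        have lk2: "l k \<le> (if k = 0 then 1 - \<epsilon> / 2 else 0) + \<epsilon> / (2 * real d)" if "k < d" for k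
        proof (cases "k = 0")
          case True then show ?thesis using lk[OF that] ed by (simp add: b_def)
        next
          case False then show ?thesis using lk[OF that] by (simp add: b_def)
        qed
        have "(\<Sum>k<d. l k) \<le> (\<Sum>k<d. (if k = 0 then 1 - \<epsilon> / 2 else 0) + \<epsilon> / (2 * real d))"
          using lk2 by (intro sum_mono) auto
        also have "\<dots> = 1 - \<epsilon> / 2 + real d * (\<epsilon> / (2 * real d))"
          using d1 by (simp add: sum.distrib sum.delta)
        also have "\<dots> = 1" using d1 by simp
        finally have s1: "(\<Sum>k<d. l k) \<le> 1" .
        have nn: "\<forall>k<d. 0 \<le> l k"
        proof (intro allI impI)
          fix k assume "k < d"
          then have "a k \<le> l k" using lk by blast
          moreover have "0 \<le> a k" using eh by (simp add: a_def)
          ultimately show "0 \<le> l k" by linarith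
        qed
        have lS: "l \<in> simplex_param d" using l s1 nn by (auto simp: simplex_param_def PiE_def Pi_def)
        have l0: "1 - \<epsilon> \<le> l 0" using lk[of 0] d1 by (simp add: a_def)
        have V0: "\<forall>k\<le>d. ?V ! 0 \<le> ?V ! k" using win_V[OF i] by auto
        have lo: "x ! i \<le> fV d ?V l" using fV_lower[OF lS V0] win_nth[OF i, of 0] by simp
        have "fV d ?V l - x ! i \<le> (1 - l 0) * R"
          using fV_upper[OF lS win_V[OF i] d1] win_nth[OF i, of 0] win_nth[OF i, of d] by (simp add: R_def)
        also have "\<dots> \<le> \<epsilon> * R" using l0 R0 by (intro mult_right_mono) auto
        finally have "fV d ?V l < x ! Suc i" using eR g0 by (simp add: \<gamma>_def)
        then show "l \<in> ?A" using lo lS False l by (auto simp: BB_def space_PP0 PiE_def)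
      qed
    qed
  qed
qed

lemma cone_iff:
  assumes la: "length \<alpha> = n - d"
  shows "in_spline_cone d x (spline_combination d x \<alpha>) \<longleftrightarrow> (\<forall>i<n - d. 0 \<le> \<alpha> ! i)"
proof
  assume "\<forall>i<n - d. 0 \<le> \<alpha> ! i"
  then show "in_spline_cone d x (spline_combination d x \<alpha>)"
    unfolding in_spline_cone_def using la lx by auto
next
  assume "in_spline_cone d x (spline_combination d x \<alpha>)"
  then obtain \<beta> where lb: "length \<beta> = n - d" and bn: "\<forall>i<length \<beta>. 0 \<le> \<beta> ! i"
    and eq: "\<forall>A\<in>sets borel. spline_combination d x \<alpha> A = spline_combination d x \<beta> A"
    unfolding in_spline_cone_def using lx by auto
  define \<mu> where "\<mu> j A = measure (simplex_measure d (window x d j)) A" for j A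
  have same: "\<alpha> ! i = \<beta> ! i" if "i < n - d" for i
    using that
  proof (induction i rule: less_induct)
    case (less i)
    have "(\<Sum>j<n - d. \<alpha> ! j * \<mu> j (BB d x i)) = (\<Sum>j<n - d. \<beta> ! j * \<mu> j (BB d x i))"
      using eq BB_borel la lb by (simp add: spline_combination_def \<mu>_def)
    then have "(\<Sum>j<n - d. (\<alpha> ! j - \<beta> ! j) * \<mu> j (BB d x i)) = 0"
      by (simp add: left_diff_distrib sum_subtractf)
    moreover have "(\<Sum>j<n - d. (\<alpha> ! j - \<beta> ! j) * \<mu> j (BB d x i)) = (\<alpha> ! i - \<beta> ! i) * \<mu> i (BB d x i)"
    proof -
      have "(\<Sum>j<n - d. (\<alpha> ! j - \<beta> ! j) * \<mu> j (BB d x i)) = (\<alpha> ! i - \<beta> ! i) * \<mu> i (BB d x i)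
          + (\<Sum>j\<in>{..<n - d} - {i}. (\<alpha> ! j - \<beta> ! j) * \<mu> j (BB d x i))"
        by (rule sum.remove) (use less.prems in auto)
      moreover have "(\<Sum>j\<in>{..<n - d} - {i}. (\<alpha> ! j - \<beta> ! j) * \<mu> j (BB d x i)) = 0"
      proof (rule sum.neutral, rule ballI)
        fix j assume j: "j \<in> {..<n - d} - {i}"
        show "(\<alpha> ! j - \<beta> ! j) * \<mu> j (BB d x i) = 0"
        proof (cases "j < i")
          case True then show ?thesis using less.IH less.prems by simp
        next
          case False then have "i < j" using j by auto
          then show ?thesis using mu_zero j by (simp add: \<mu>_def)
        qed
      qed
      ultimately show ?thesis by simp
    qed
    ultimately show ?case using mu_pos[OF less.prems] by (simp add: \<mu>_def)
  qed
  show "\<forall>i<n - d. 0 \<le> \<alpha> ! i" using same bn lb by simp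
qed

end


lemma S_facts:
  assumes n: "n \<ge> d + 1" and xa: "(x, \<alpha>) \<in> UU d n" and sx: "sorted_wrt (<) x"
  shows "length x = n" "length \<alpha> = n - d" "\<forall>y\<in>set x. wt d x \<alpha> y \<noteq> 0"
proof -
  show lx: "length x = n" and la: "length \<alpha> = n - d" using xa by (auto simp: UU_def pair_space_def)
  have "gg d n (x @ \<alpha>) \<noteq> 0" using xa by (auto simp: UU_def)
  then show "\<forall>y\<in>set x. wt d x \<alpha> y \<noteq> 0" by (rule wt_nonzero[OF n lx la sx])
qed

theorem theorem2p14:
  fixes d n :: nat
  assumes "n \<ge> d + 1"
  shows "\<exists>U. zariski_open_dense_pairs d n U \<and>
    (let S = {(x, \<alpha>) \<in> U. sorted_wrt (<) x \<and> (\<forall>i<n - d. \<alpha> ! i \<noteq> 0)} in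
      inj_on (\<lambda>(x, \<alpha>). prony_map d n x \<alpha>) S \<and>
      (\<forall>(x, \<alpha>) \<in> S. let M = prony_map d n x \<alpha> in
         (\<exists>u \<in> hankel_kernel d n M. u \<noteq> replicate (Suc n) 0 \<and>
             (\<forall>v \<in> hankel_kernel d n M. \<exists>t::real. v = map (\<lambda>a. t * a) u)) \<and>
         (\<forall>u \<in> hankel_kernel d n M. u \<noteq> replicate (Suc n) 0 \<longrightarrow>
             {t. poly (Poly u) t = 0} = set x) \<and>
         (\<forall>\<beta>. solves_system d n x M \<beta> \<longleftrightarrow> \<beta> = \<alpha>) \<and>
         (in_spline_cone d x (spline_combination d x \<alpha>) \<longleftrightarrow>
             (\<forall>i<n - d. 0 \<le> (THE \<beta>. solves_system d n x M \<beta>) ! i))))"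
proof -
  note n = assms
  define S where "S = {(x, \<alpha>) \<in> UU d n. sorted_wrt (<) x \<and> (\<forall>i<n - d. \<alpha> ! i \<noteq> 0)}"
  have P: "let M = prony_map d n x \<alpha> in
         (\<exists>u \<in> hankel_kernel d n M. u \<noteq> replicate (Suc n) 0 \<and>
             (\<forall>v \<in> hankel_kernel d n M. \<exists>t::real. v = map (\<lambda>a. t * a) u)) \<and>
         (\<forall>u \<in> hankel_kernel d n M. u \<noteq> replicate (Suc n) 0 \<longrightarrow>
             {t. poly (Poly u) t = 0} = set x) \<and>
         (\<forall>\<beta>. solves_system d n x M \<beta> \<longleftrightarrow> \<beta> = \<alpha>) \<and>
         (in_spline_cone d x (spline_combination d x \<alpha>) \<longleftrightarrow>
             (\<forall>i<n - d. 0 \<le> (THE \<beta>. solves_system d n x M \<beta>) ! i))"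
    if xa: "(x, \<alpha>) \<in> S" for x \<alpha>
  proof -
    have U: "(x, \<alpha>) \<in> UU d n" and sx: "sorted_wrt (<) x" using xa by (auto simp: S_def)
    note F = S_facts[OF n U sx]
    have K: "(\<exists>u \<in> hankel_kernel d n (prony_map d n x \<alpha>). u \<noteq> replicate (Suc n) 0 \<and>
             (\<forall>v \<in> hankel_kernel d n (prony_map d n x \<alpha>). \<exists>t::real. v = map (\<lambda>a. t * a) u)) \<and>
         (\<forall>u \<in> hankel_kernel d n (prony_map d n x \<alpha>). u \<noteq> replicate (Suc n) 0 \<longrightarrow>
             {t. poly (Poly u) t = 0} = set x)"
      by (rule kernel_structure[OF n F(1,2) sx F(3)])
    have So: "\<forall>\<beta>. solves_system d n x (prony_map d n x \<alpha>) \<beta> \<longleftrightarrow> \<beta> = \<alpha>"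
      using solves_iff[OF n F(1,2) sx] by blast
    have T: "(THE \<beta>. solves_system d n x (prony_map d n x \<alpha>) \<beta>) = \<alpha>"
      using So by simp
    have C: "in_spline_cone d x (spline_combination d x \<alpha>) \<longleftrightarrow> (\<forall>i<n - d. 0 \<le> \<alpha> ! i)"
      by (rule cone_iff[OF n F(1) sx F(2)])
    show ?thesis unfolding Let_def T using K So C by blast
  qed
  have I: "inj_on (\<lambda>(x, \<alpha>). prony_map d n x \<alpha>) S"
  proof (rule inj_onI, clarify)
    fix x \<alpha> x' \<alpha>'
    assume a1: "(x, \<alpha>) \<in> S" and a2: "(x', \<alpha>') \<in> S" and eq: "prony_map d n x \<alpha> = prony_map d n x' \<alpha>'"
    have sx: "sorted_wrt (<) x" and sx': "sorted_wrt (<) x'" using a1 a2 by (auto simp: S_def)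
    have U: "(x, \<alpha>) \<in> UU d n" "(x', \<alpha>') \<in> UU d n" using a1 a2 by (auto simp: S_def)
    note F = S_facts[OF n U(1) sx] and F' = S_facts[OF n U(2) sx']
    note K = kernel_structure[OF n F(1,2) sx F(3)] and K' = kernel_structure[OF n F'(1,2) sx' F'(3)]
    obtain u where u: "u \<in> hankel_kernel d n (prony_map d n x \<alpha>)" "u \<noteq> replicate (Suc n) 0"
      using K by blast
    have "{t. poly (Poly u) t = 0} = set x" using K u by blast
    moreover have "{t. poly (Poly u) t = 0} = set x'" using K' u eq by auto
    ultimately have "set x = set x'" by simp
    then have xx: "x = x'" using sx sx' by (simp add: strict_sorted_iff sorted_distinct_set_unique)
    have "solves_system d n x (prony_map d n x \<alpha>') \<alpha>'"
      using solves_iff[OF n F'(1,2) sx'] xx by simp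
    then have "solves_system d n x (prony_map d n x \<alpha>) \<alpha>'" using eq xx by simp
    then have "\<alpha>' = \<alpha>" using solves_iff[OF n F(1,2) sx] by simp
    then show "x = x' \<and> \<alpha> = \<alpha>'" using xx by simp
  qed
  have B: "\<forall>(x, \<alpha>) \<in> S. let M = prony_map d n x \<alpha> in
         (\<exists>u \<in> hankel_kernel d n M. u \<noteq> replicate (Suc n) 0 \<and>
             (\<forall>v \<in> hankel_kernel d n M. \<exists>t::real. v = map (\<lambda>a. t * a) u)) \<and>
         (\<forall>u \<in> hankel_kernel d n M. u \<noteq> replicate (Suc n) 0 \<longrightarrow>
             {t. poly (Poly u) t = 0} = set x) \<and>
         (\<forall>\<beta>. solves_system d n x M \<beta> \<longleftrightarrow> \<beta> = \<alpha>) \<and>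
         (in_spline_cone d x (spline_combination d x \<alpha>) \<longleftrightarrow>
             (\<forall>i<n - d. 0 \<le> (THE \<beta>. solves_system d n x M \<beta>) ! i))"
  proof (rule ballI)
    fix p assume p: "p \<in> S"
    obtain x \<alpha> where pe: "p = (x, \<alpha>)" by (cases p)
    show "case p of (x, \<alpha>) \<Rightarrow> let M = prony_map d n x \<alpha> in
         (\<exists>u \<in> hankel_kernel d n M. u \<noteq> replicate (Suc n) 0 \<and>
             (\<forall>v \<in> hankel_kernel d n M. \<exists>t::real. v = map (\<lambda>a. t * a) u)) \<and>
         (\<forall>u \<in> hankel_kernel d n M. u \<noteq> replicate (Suc n) 0 \<longrightarrow>
             {t. poly (Poly u) t = 0} = set x) \<and>
         (\<forall>\<beta>. solves_system d n x M \<beta> \<longleftrightarrow> \<beta> = \<alpha>) \<and>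
         (in_spline_cone d x (spline_combination d x \<alpha>) \<longleftrightarrow>
             (\<forall>i<n - d. 0 \<le> (THE \<beta>. solves_system d n x M \<beta>) ! i))"
      unfolding pe prod.case by (rule P) (use p pe in simp)
  qed
  show ?thesis
    apply (rule exI[of _ "UU d n"])
    apply (rule conjI[OF UU_ok[OF n]])
    unfolding S_def[symmetric]
    apply (subst Let_def)
    apply (rule conjI[OF I B])
    done
qed

end
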